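(* In the setting below, assume $\|\nabla f_i(x)\|\le G_i$ for all $x$ and $i$. Then for any $k\in[K]$, any permutation $\sigma_k$ and any $z\in\mathbb R^d$, $$\frac1n\sum_{i=1}^n\Big(B_{f_{\sigma_k^i}}(x_{k+1},x_k^i)-B_{f_{\sigma_k^i}}(z,x_k^i)\Big)\le2\bar G\|x_{k+1}-x_k\|+\bar G^2n\eta_k.$$
   Context: Setting. Let $n,d\in\mathbb N$, let $f_1,\dots,f_n:\mathbb R^d\to\mathbb R$ be convex, let $\psi:\mathbb R^d\to\mathbb R\cup\{+\infty\}$ be proper, closed and convex. For a convex function $g$, $\nabla g(x)$ denotes an element of $\partial g(x)$ (for each $f_i$ a fixed selection of subgradients, the same one used in the algorithm and in the Bregman divergences), and $B_g(x,y)=g(x)-g(y)-\langle\nabla g(y),x-y\rangle$. Proximal shuffling gradient method: given $x_1\in\mathrm{dom}\,\psi$, a number of epochs $K\ge2$ and stepsizes $\eta_k>0$, for $k=1,\dots,K$: choose a permutation $\sigma_k=(\sigma_k^1,\dots,\sigma_k^n)$ of $[n]=\{1,\dots,n\}$; set $x_k^1=x_k$ and $x_k^{i+1}=x_k^i-\eta_k\nabla f_{\sigma_k^i}(x_k^i)$ for $i=1,\dots,n$; set $x_{k+1}=\arg\min_{x\in\mathbb R^d}\{n\psi(x)+\frac{1}{2\eta_k}\|x-x_k^{n+1}\|^2\}$. Lipschitz condition: constants $G_i>0$ with $\|\nabla f_i(x)\|\le G_i$ for all $x\in\mathbb R^d$, $i\in[n]$ (for every subgradient); $\bar G=\frac1n\sum_{i=1}^nG_i$.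 *)

theory Defs
  imports "HOL-Analysis.Analysis"
begin

definition subdiff :: "('a::real_inner \<Rightarrow> real) \<Rightarrow> 'a \<Rightarrow> 'a set" where
  "subdiff f x = {g. \<forall>y. f y \<ge> f x + inner g (y - x)}"

(* Bregman divergence B_f(x,y) w.r.t. a fixed subgradient selection gf of f *)
definition bregman :: "('a::real_inner \<Rightarrow> real) \<Rightarrow> ('a \<Rightarrow> 'a) \<Rightarrow> 'a \<Rightarrow> 'a \<Rightarrow> real" where
  "bregman f gf x y = f x - f y - inner (gf y) (x - y)"

definition proper_fun :: "('a \<Rightarrow> ereal) \<Rightarrow> bool" where
  "proper_fun psi \<longleftrightarrow> (\<forall>x. psi x \<noteq> -\<infinity>) \<and> (\<exists>x. psi x \<noteq> \<infinity>)"

definition closed_fun :: "('a::topological_space \<Rightarrow> ereal) \<Rightarrow> bool" where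
  "closed_fun psi \<longleftrightarrow> closed {(x, r::real). psi x \<le> ereal r}"

definition convex_fun :: "('a::real_vector \<Rightarrow> ereal) \<Rightarrow> bool" where
  "convex_fun psi \<longleftrightarrow> (\<forall>x y t. 0 \<le> t \<and> t \<le> 1 \<longrightarrow>
      psi ((1 - t) *\<^sub>R x + t *\<^sub>R y) \<le> ereal (1 - t) * psi x + ereal t * psi y)"

end

theory Submission
  imports Defs
begin

lemma pair_sum_bound:
  fixes a :: "nat \<Rightarrow> real"
  shows "2 * (\<Sum>i=1..m. a i * (\<Sum>l=1..<i. a l)) \<le> (\<Sum>i=1..m. a i)\<^sup>2"
proof (induction m)
  case 0 then show ?case by simp
next
  case (Suc m)
  have e: "(\<Sum>l=1..<Suc m. a l) = (\<Sum>i=1..m. a i)"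
    by (rule sum.cong) auto
  have "2 * (\<Sum>i=1..Suc m. a i * (\<Sum>l=1..<i. a l))
      = 2 * (\<Sum>i=1..m. a i * (\<Sum>l=1..<i. a l)) + 2 * a (Suc m) * (\<Sum>i=1..m. a i)"
  proof -
    have "(\<Sum>i=1..Suc m. a i * (\<Sum>l=1..<i. a l)) = (\<Sum>i=1..m. a i * (\<Sum>l=1..<i. a l)) + a (Suc m) * (\<Sum>l=1..<Suc m. a l)"
      by simp
    then show ?thesis by (simp only: e) (simp add: algebra_simps)
  qed
  also have "\<dots> \<le> (\<Sum>i=1..m. a i)\<^sup>2 + 2 * a (Suc m) * (\<Sum>i=1..m. a i) + (a (Suc m))\<^sup>2"
    using Suc zero_le_power2[of "a (Suc m)"] by linarith
  also have "\<dots> = (\<Sum>i=1..Suc m. a i)\<^sup>2"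
  proof -
    have "(\<Sum>i=1..Suc m. a i) = (\<Sum>i=1..m. a i) + a (Suc m)" by simp
    then show ?thesis by (simp add: power2_eq_square algebra_simps)
  qed
  finally show ?case .
qed

lemma breg_term:
  fixes f :: "'a::real_inner \<Rightarrow> real"
  assumes sg: "\<And>y. gf y \<in> subdiff f y"
    and lip: "\<And>y. norm (gf y) \<le> G"
  shows "bregman f gf x' y - bregman f gf z y \<le> 2 * G * norm (x' - y)"
proof -
  have s1: "f z \<ge> f y + inner (gf y) (z - y)" using sg[of y] unfolding subdiff_def by auto
  have s2: "f y \<ge> f x' + inner (gf x') (y - x')" using sg[of x'] unfolding subdiff_def by auto
  have c1: "inner (gf x') (x' - y) \<le> G * norm (x' - y)"
    using norm_cauchy_schwarz[of "gf x'" "x' - y"] lip[of x']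
    by (meson mult_right_mono norm_ge_zero order_trans)
  have c2: "- inner (gf y) (x' - y) \<le> G * norm (x' - y)"
  proof -
    have "- inner (gf y) (x' - y) = inner (gf y) (y - x')" by (simp add: inner_diff_right)
    also have "\<dots> \<le> norm (gf y) * norm (y - x')" by (rule norm_cauchy_schwarz)
    also have "\<dots> \<le> G * norm (x' - y)" using lip[of y] by (simp add: norm_minus_commute mult_right_mono)
    finally show ?thesis .
  qed
  have "inner (gf x') (y - x') = - inner (gf x') (x' - y)"
    by (simp add: inner_diff_right)
  moreover have "inner (gf y) (z - y) = inner (gf y) (z - x') + inner (gf y) (x' - y)"
    by (simp add: inner_diff_right)
  ultimately show ?thesis using s1 s2 c1 c2 unfolding bregman_def
    by (simp add: inner_diff_right algebra_simps)
qed

theorem mainTheorem8: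
  fixes n K :: nat
    and f :: "nat \<Rightarrow> 'a::euclidean_space \<Rightarrow> real"
    and gf :: "nat \<Rightarrow> 'a \<Rightarrow> 'a"
    and psi :: "'a \<Rightarrow> ereal"
    and G :: "nat \<Rightarrow> real"
    and eta :: "nat \<Rightarrow> real"
    and \<sigma> :: "nat \<Rightarrow> nat \<Rightarrow> nat"
    and x :: "nat \<Rightarrow> 'a"
    and xi :: "nat \<Rightarrow> nat \<Rightarrow> 'a"
    and k :: nat and z :: 'a
  assumes n_pos: "0 < n"
    and K_ge: "K \<ge> 2"
    and f_convex: "\<And>i. i \<in> {1..n} \<Longrightarrow> convex_on UNIV (f i)"
    and gf_subgrad: "\<And>i y. i \<in> {1..n} \<Longrightarrow> gf i y \<in> subdiff (f i) y"
    and psi_proper: "proper_fun psi"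
    and psi_closed: "closed_fun psi"
    and psi_convex: "convex_fun psi"
    and G_pos: "\<And>i. i \<in> {1..n} \<Longrightarrow> G i > 0"
    and lipschitz: "\<And>i y g. i \<in> {1..n} \<Longrightarrow> g \<in> subdiff (f i) y \<Longrightarrow> norm g \<le> G i"
    and x1_dom: "psi (x 1) \<noteq> \<infinity>"
    and eta_pos: "\<And>k. k \<in> {1..K} \<Longrightarrow> eta k > 0"
    and perm: "\<And>k. k \<in> {1..K} \<Longrightarrow> \<sigma> k permutes {1..n}"
    and inner_start: "\<And>k. k \<in> {1..K} \<Longrightarrow> xi k 1 = x k"
    and inner_step: "\<And>k i. k \<in> {1..K} \<Longrightarrow> i \<in> {1..n} \<Longrightarrow>
        xi k (i + 1) = xi k i - eta k *\<^sub>R gf (\<sigma> k i) (xi k i)"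
    and prox_step: "\<And>k y. k \<in> {1..K} \<Longrightarrow>
        ereal (real n) * psi (x (k + 1)) + ereal (1 / (2 * eta k) * (norm (x (k + 1) - xi k (n + 1)))\<^sup>2)
        \<le> ereal (real n) * psi y + ereal (1 / (2 * eta k) * (norm (y - xi k (n + 1)))\<^sup>2)"
    and k_range: "k \<in> {1..K}"
  shows "(1 / real n) * (\<Sum>i=1..n. bregman (f (\<sigma> k i)) (gf (\<sigma> k i)) (x (k + 1)) (xi k i)
                                   - bregman (f (\<sigma> k i)) (gf (\<sigma> k i)) z (xi k i))
         \<le> 2 * ((\<Sum>i=1..n. G i) / real n) * norm (x (k + 1) - x k)
           + ((\<Sum>i=1..n. G i) / real n)\<^sup>2 * real n * eta k"
proof -
  define a where "a i = G (\<sigma> k i)" for i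
  define e where "e = eta k"
  define d where "d = norm (x (k + 1) - x k)"
  define S where "S = (\<Sum>i=1..n. G i)"
  have p: "\<sigma> k permutes {1..n}" using perm k_range by auto
  have sig_in: "\<sigma> k i \<in> {1..n}" if "i \<in> {1..n}" for i
    using permutes_in_image[OF p] that by blast
  have e_pos: "e > 0" using eta_pos k_range e_def by auto
  have a_nn: "a i \<ge> 0" if "i \<in> {1..n}" for i
    using G_pos[OF sig_in[OF that]] a_def by simp
  have Sa: "(\<Sum>i=1..n. a i) = S"
    unfolding a_def S_def using sum.permute[OF p, of G] by (simp add: o_def)
  have dist: "norm (xi k i - x k) \<le> e * (\<Sum>l=1..<i. a l)" if "1 \<le> i" "i \<le> n + 1" for i
    using that
  proof (induction i rule: dec_induct)
    case base then show ?case using inner_start[OF k_range] by simp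
  next
    case (step m)
    have m: "m \<in> {1..n}" using step by auto
    have g: "norm (gf (\<sigma> k m) (xi k m)) \<le> a m"
      using lipschitz[OF sig_in[OF m] gf_subgrad[OF sig_in[OF m]]] a_def by simp
    have "norm (xi k (Suc m) - x k) = norm ((xi k m - x k) - e *\<^sub>R gf (\<sigma> k m) (xi k m))"
    proof -
      have "xi k (Suc m) = xi k m - e *\<^sub>R gf (\<sigma> k m) (xi k m)"
        using inner_step[OF k_range m] e_def by simp
      hence "xi k (Suc m) - x k = (xi k m - x k) - e *\<^sub>R gf (\<sigma> k m) (xi k m)"
        by (simp add: algebra_simps)
      thus ?thesis by (rule arg_cong)
    qed
    also have "\<dots> \<le> norm (xi k m - x k) + e * norm (gf (\<sigma> k m) (xi k m))"
      using norm_triangle_ineq4[of "xi k m - x k" "e *\<^sub>R gf (\<sigma> k m) (xi k m)"] e_pos by simp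
    also have "\<dots> \<le> e * (\<Sum>l=1..<m. a l) + e * a m"
      using step g e_pos by (simp add: add_mono mult_left_mono)
    also have "\<dots> = e * (\<Sum>l=1..<Suc m. a l)"
      using step(1) by (simp add: algebra_simps)
    finally show ?case .
  qed
  have trm: "bregman (f (\<sigma> k i)) (gf (\<sigma> k i)) (x (k + 1)) (xi k i)
               - bregman (f (\<sigma> k i)) (gf (\<sigma> k i)) z (xi k i)
             \<le> 2 * a i * (d + e * (\<Sum>l=1..<i. a l))" if i: "i \<in> {1..n}" for i
  proof -
    have "bregman (f (\<sigma> k i)) (gf (\<sigma> k i)) (x (k + 1)) (xi k i)
               - bregman (f (\<sigma> k i)) (gf (\<sigma> k i)) z (xi k i)
          \<le> 2 * a i * norm (x (k + 1) - xi k i)"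
      unfolding a_def
      by (rule breg_term[OF gf_subgrad[OF sig_in[OF i]] lipschitz[OF sig_in[OF i] gf_subgrad[OF sig_in[OF i]]]])
    also have "norm (x (k + 1) - xi k i) \<le> d + e * (\<Sum>l=1..<i. a l)"
    proof -
      have "norm (x (k + 1) - xi k i) \<le> norm (x (k + 1) - x k) + norm (xi k i - x k)"
        using norm_triangle_ineq[of "x (k + 1) - x k" "x k - xi k i"]
        by (simp add: norm_minus_commute[of "x k" "xi k i"])
      then show ?thesis using dist[of i] i d_def by auto
    qed
    hence "2 * a i * norm (x (k + 1) - xi k i) \<le> 2 * a i * (d + e * (\<Sum>l=1..<i. a l))"
      using a_nn[OF i] by (simp add: mult_left_mono)
    finally show ?thesis .
  qed
  have "(\<Sum>i=1..n. bregman (f (\<sigma> k i)) (gf (\<sigma> k i)) (x (k + 1)) (xi k i)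
                                   - bregman (f (\<sigma> k i)) (gf (\<sigma> k i)) z (xi k i))
        \<le> (\<Sum>i=1..n. 2 * a i * (d + e * (\<Sum>l=1..<i. a l)))"
    by (rule sum_mono, rule trm, assumption)
  also have "\<dots> = (\<Sum>i=1..n. 2 * d * a i + e * (2 * (a i * (\<Sum>l=1..<i. a l))))"
    by (rule sum.cong) (simp_all add: algebra_simps)
  also have "\<dots> = 2 * d * (\<Sum>i=1..n. a i) + e * (2 * (\<Sum>i=1..n. a i * (\<Sum>l=1..<i. a l)))"
    by (simp only: sum.distrib sum_distrib_left)
  also have "\<dots> \<le> 2 * d * S + e * S\<^sup>2"
    using pair_sum_bound[of a n] e_pos Sa by simp
  finally have main: "(\<Sum>i=1..n. bregman (f (\<sigma> k i)) (gf (\<sigma> k i)) (x (k + 1)) (xi k i)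
                                   - bregman (f (\<sigma> k i)) (gf (\<sigma> k i)) z (xi k i))
        \<le> 2 * d * S + e * S\<^sup>2" .
  have n0: "real n > 0" using n_pos by simp
  have "(1 / real n) * (\<Sum>i=1..n. bregman (f (\<sigma> k i)) (gf (\<sigma> k i)) (x (k + 1)) (xi k i)
                                   - bregman (f (\<sigma> k i)) (gf (\<sigma> k i)) z (xi k i))
        \<le> (1 / real n) * (2 * d * S + e * S\<^sup>2)"
    using main n0 by (intro mult_left_mono) auto
  also have "\<dots> = 2 * (S / real n) * d + (S / real n)\<^sup>2 * real n * e"
    using n0 by (simp add: power2_eq_square divide_simps)
  finally show ?thesis unfolding S_def d_def e_def .
qed

end
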